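(* Let $(\{0,1\}^{\mathbb N},\mathbb B_\Pi,m,\sigma)$ be an ergodic Markov shift over two symbols, $X$ a lexicographic-like random variable, $d\in\mathbb N$, $O=\bigcup_{n=0}^\infty\sigma^{-n}(\{\overline0\})$ with $\overline0=(0,0,\dots)$, and $\widetilde{\mathcal P}^X(d)=\{P\setminus O\mid P\in\mathcal P^X(d)\}\cup\{O\}$. If $P_i,P_j\in\widetilde{\mathcal P}^X(d)$ and $P_i\subseteq C_{a_0}$ for some $a_0\in\{0,1\}$, then either $P_i\cap\sigma^{-1}(P_j)=C_{a_0}\cap\sigma^{-1}(P_j)$ or $m(P_i\cap\sigma^{-1}(P_j))=0$.
   Context: Markov shift over $\{0,1\}$: given a $2\times2$ stochastic matrix $Q=(q_{ij})$ and a stationary probability vector $p$ with positive entries, the system on one-sided sequences $s=(s_0,s_1,\dots)\in\{0,1\}^{\mathbb N}$ with $\sigma$-algebra $\mathbb B_\Pi$ generated by cylinders $C_{a_0\dots a_{n-1}}=\{s:s_i=a_i,i<n\}$, shift $(\sigma s)_j=s_{j+1}$ and $m(C_{a_0\dots a_{n-1}})=p_{a_0}q_{a_0a_1}\cdots q_{a_{n-2}a_{n-1}}$; ergodic means every $\sigma$-invariant set has measure $0$ or $1$. Lexicographic order: $r\prec s$ iff $r_0<s_0$ or there is $k\in\mathbb N$ with $r_i=s_i$ for $i<k$ and $r_k<s_k$. $X$ is lexicographic-like if it is injective on a set of full $m$-measure and for all $s$ and $j,n\in\mathbb N_0$: $X(\sigma^j s)\le X(\sigma^n s)$ iff $\sigma^j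 s\preceq\sigma^n s$. Ordinal pattern: $(x_0,\dots,x_d)$ has pattern $\pi=(r_0,\dots,r_d)\in\Pi_d$ (permutations of $\{0,\dots,d\}$) if $x_{r_0}\ge\dots\ge x_{r_d}$ and $r_{l-1}>r_l$ whenever $x_{r_{l-1}}=x_{r_l}$. The ordinal partition $\mathcal P^X(d)$ consists of the sets $P_\pi=\{s:(X(\sigma^d s),\dots,X(\sigma s),X(s))\text{ has ordinal pattern }\pi\}$, $\pi\in\Pi_d$. *)

theory Defs
  imports "HOL-Analysis.Analysis"
begin

definition seqspace :: "(nat \<Rightarrow> nat) set" where
  "seqspace = {s. \<forall>i. s i \<in> {0, 1}}"

definition shift :: "(nat \<Rightarrow> nat) \<Rightarrow> (nat \<Rightarrow> nat)" where
  "shift s = (\<lambda>j. s (Suc j))"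

definition cyl :: "nat list \<Rightarrow> (nat \<Rightarrow> nat) set" where
  "cyl as = {s \<in> seqspace. \<forall>i < length as. s i = as ! i}"

definition cylinders :: "(nat \<Rightarrow> nat) set set" where
  "cylinders = {cyl as | as. set as \<subseteq> {0, 1}}"

definition markov_cyl :: "(nat \<Rightarrow> real) \<Rightarrow> (nat \<Rightarrow> nat \<Rightarrow> real) \<Rightarrow> nat list \<Rightarrow> real" where
  "markov_cyl p q as = p (as ! 0) * (\<Prod>i < length as - 1. q (as ! i) (as ! Suc i))"

definition markov_shift ::
  "(nat \<Rightarrow> nat \<Rightarrow> real) \<Rightarrow> (nat \<Rightarrow> real) \<Rightarrow> (nat \<Rightarrow> nat) measure \<Rightarrow> bool" where
  "markov_shift q p M \<longleftrightarrow>
     (\<forall>i \<in> {0, 1}. \<forall>j \<in> {0, 1}. q i j \<ge> 0) \<and>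
     (\<forall>i \<in> {0, 1}. q i 0 + q i 1 = 1) \<and>
     p 0 > 0 \<and> p 1 > 0 \<and> p 0 + p 1 = 1 \<and>
     (\<forall>j \<in> {0, 1}. p 0 * q 0 j + p 1 * q 1 j = p j) \<and>
     space M = seqspace \<and>
     sets M = sigma_sets seqspace cylinders \<and>
     (\<forall>as. as \<noteq> [] \<and> set as \<subseteq> {0, 1} \<longrightarrow>
        emeasure M (cyl as) = ennreal (markov_cyl p q as))"

definition ergodic_shift :: "(nat \<Rightarrow> nat) measure \<Rightarrow> bool" where
  "ergodic_shift M \<longleftrightarrow>
     (\<forall>A \<in> sets M. shift -` A \<inter> space M = A \<longrightarrow> emeasure M A = 0 \<or> emeasure M A = 1)"

definition lex_less :: "(nat \<Rightarrow> nat) \<Rightarrow> (nat \<Rightarrow> nat) \<Rightarrow> bool" where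
  "lex_less r s \<longleftrightarrow> r 0 < s 0 \<or> (\<exists>k. (\<forall>i < k. r i = s i) \<and> r k < s k)"

definition lex_le :: "(nat \<Rightarrow> nat) \<Rightarrow> (nat \<Rightarrow> nat) \<Rightarrow> bool" where
  "lex_le r s \<longleftrightarrow> lex_less r s \<or> r = s"

definition lexicographic_like :: "(nat \<Rightarrow> nat) measure \<Rightarrow> ((nat \<Rightarrow> nat) \<Rightarrow> real) \<Rightarrow> bool" where
  "lexicographic_like M X \<longleftrightarrow>
     (\<exists>A \<in> sets M. emeasure M (space M - A) = 0 \<and> inj_on X A) \<and>
     (\<forall>s \<in> space M. \<forall>j n. X ((shift ^^ j) s) \<le> X ((shift ^^ n) s) \<longleftrightarrow>
                               lex_le ((shift ^^ j) s) ((shift ^^ n) s))"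

definition perms :: "nat \<Rightarrow> nat list set" where
  "perms d = {r. distinct r \<and> set r = {0..d}}"

definition has_pattern :: "(nat \<Rightarrow> real) \<Rightarrow> nat \<Rightarrow> nat list \<Rightarrow> bool" where
  "has_pattern x d r \<longleftrightarrow>
     (\<forall>l. 1 \<le> l \<and> l \<le> d \<longrightarrow>
        x (r ! (l - 1)) \<ge> x (r ! l) \<and>
        (x (r ! (l - 1)) = x (r ! l) \<longrightarrow> r ! (l - 1) > r ! l))"

text \<open>P_pi: the vector (X(sigma^d s), ..., X(sigma s), X(s)) has pattern pi,
  i.e. its i-th entry is X(sigma^(d-i) s).\<close>
definition pattern_set :: "((nat \<Rightarrow> nat) \<Rightarrow> real) \<Rightarrow> nat \<Rightarrow> nat list \<Rightarrow> (nat \<Rightarrow> nat) set" where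
  "pattern_set X d r = {s \<in> seqspace. has_pattern (\<lambda>i. X ((shift ^^ (d - i)) s)) d r}"

definition ordinal_partition :: "((nat \<Rightarrow> nat) \<Rightarrow> real) \<Rightarrow> nat \<Rightarrow> (nat \<Rightarrow> nat) set set" where
  "ordinal_partition X d = pattern_set X d ` perms d"

definition zero_orbit :: "(nat \<Rightarrow> nat) set" where
  "zero_orbit = (\<Union>n. (shift ^^ n) -` {(\<lambda>_. 0)} \<inter> seqspace)"

definition mod_partition :: "((nat \<Rightarrow> nat) \<Rightarrow> real) \<Rightarrow> nat \<Rightarrow> (nat \<Rightarrow> nat) set set" where
  "mod_partition X d = (\<lambda>P. P - zero_orbit) ` ordinal_partition X d \<union> {zero_orbit}"

end

theory Submission
  imports Defs
begin

lemma lex_less_iff: "lex_less v w \<longleftrightarrow> (\<exists>k. (\<forall>i<k. v i = w i) \<and> v k < w k)"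
  unfolding lex_less_def by (metis less_nat_zero_code)

lemma lex_asym: "lex_less v w \<Longrightarrow> \<not> lex_less w v"
  unfolding lex_less_iff by (metis less_asym linorder_neqE_nat)

lemma lex_irrefl: "\<not> lex_less v v"
  using lex_asym by blast

lemma lex_total: "v \<noteq> w \<Longrightarrow> lex_less v w \<or> lex_less w v"
proof -
  assume "v \<noteq> w"
  then have ex: "\<exists>i. v i \<noteq> w i" by auto
  define k where "k = (LEAST i. v i \<noteq> w i)"
  have k1: "v k \<noteq> w k" unfolding k_def using LeastI_ex[OF ex] .
  have k2: "\<forall>i<k. v i = w i" unfolding k_def using not_less_Least by blast
  show ?thesis unfolding lex_less_iff using k1 k2
    by (metis linorder_neqE_nat)
qed

lemma lex_le_not: "\<not> lex_le w v \<longleftrightarrow> lex_less v w"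
  unfolding lex_le_def using lex_total lex_asym lex_irrefl by metis

lemma lex_cons: "lex_less v w \<longleftrightarrow> v 0 < w 0 \<or> (v 0 = w 0 \<and> lex_less (\<lambda>j. v (Suc j)) (\<lambda>j. w (Suc j)))"
proof
  assume "lex_less v w"
  then obtain k where k: "\<forall>i<k. v i = w i" "v k < w k" unfolding lex_less_iff by blast
  show "v 0 < w 0 \<or> (v 0 = w 0 \<and> lex_less (\<lambda>j. v (Suc j)) (\<lambda>j. w (Suc j)))"
  proof (cases k)
    case 0 then show ?thesis using k by simp
  next
    case (Suc k')
    then show ?thesis using k unfolding lex_less_iff by auto
  qed
next
  assume "v 0 < w 0 \<or> (v 0 = w 0 \<and> lex_less (\<lambda>j. v (Suc j)) (\<lambda>j. w (Suc j)))"
  then show "lex_less v w"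
  proof
    assume "v 0 < w 0" then show ?thesis unfolding lex_less_def by simp
  next
    assume a: "v 0 = w 0 \<and> lex_less (\<lambda>j. v (Suc j)) (\<lambda>j. w (Suc j))"
    then obtain k where k: "\<forall>i<k. v (Suc i) = w (Suc i)" "v (Suc k) < w (Suc k)"
      unfolding lex_less_iff by auto
    have "\<forall>i<Suc k. v i = w i"
      using k(1) a by (auto simp: less_Suc_eq_0_disj)
    then show ?thesis unfolding lex_less_iff using k(2) by blast
  qed
qed

lemma eq_cons: "v = w \<longleftrightarrow> v 0 = w 0 \<and> (\<lambda>j. v (Suc j)) = (\<lambda>j. w (Suc j))"
proof
  assume h: "v 0 = w 0 \<and> (\<lambda>j. v (Suc j)) = (\<lambda>j. w (Suc j))"
  show "v = w"
  proof
    fix j show "v j = w j"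
    proof (cases j)
      case 0 then show ?thesis using h by simp
    next
      case (Suc i) then show ?thesis using fun_cong[OF conjunct2[OF h], of i] by simp
    qed
  qed
qed simp

lemma E1:
  assumes "\<forall>i. u i \<in> {0,1::nat}" "u 0 = 1"
  shows "lex_less (\<lambda>j. u (Suc j)) u \<or> (\<lambda>j. u (Suc j)) = u"
proof (cases "\<forall>i. u i = 1")
  case True then show ?thesis by auto
next
  case False
  then have ex: "\<exists>i. u i \<noteq> 1" by auto
  define m where "m = (LEAST i. u i \<noteq> 1)"
  have m1: "u m \<noteq> 1" unfolding m_def using LeastI_ex[OF ex] .
  have m2: "\<forall>i<m. u i = 1" unfolding m_def using not_less_Least by blast
  have "m \<noteq> 0" using m1 assms(2) by metis
  then obtain m' where mm: "m = Suc m'" by (cases m) auto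
  have "u m = 0" using m1 assms(1) by blast
  then have "lex_less (\<lambda>j. u (Suc j)) u" unfolding lex_less_iff
    using m2 mm by (intro exI[of _ m']) auto
  then show ?thesis by simp
qed

lemma E0:
  assumes "\<forall>i. u i \<in> {0,1::nat}" "u 0 = 0" "u \<noteq> (\<lambda>_. 0)"
  shows "lex_less u (\<lambda>j. u (Suc j))"
proof -
  have ex: "\<exists>i. u i \<noteq> 0" using assms(3) by auto
  define m where "m = (LEAST i. u i \<noteq> 0)"
  have m1: "u m \<noteq> 0" unfolding m_def using LeastI_ex[OF ex] .
  have m2: "\<forall>i<m. u i = 0" unfolding m_def using not_less_Least by blast
  have "m \<noteq> 0" using m1 assms(2) by metis
  then obtain m' where mm: "m = Suc m'" by (cases m) auto
  have "u m \<in> {0,1}" using assms(1) by blast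
  then have "u m = 1" using m1 by auto
  then show ?thesis unfolding lex_less_iff
    using m2 mm by (intro exI[of _ m']) auto
qed

lemma shift_pow: "(shift ^^ n) s = (\<lambda>j. s (j + n))"
  by (induction n) (auto simp: shift_def)

definition keyv :: "(nat \<Rightarrow> real) \<Rightarrow> nat \<Rightarrow> nat \<Rightarrow> bool" where
  "keyv x i j \<longleftrightarrow> x j < x i \<or> (x i = x j \<and> j < i)"

lemma has_pattern_keyv: "has_pattern x d r \<longleftrightarrow> (\<forall>l. 1 \<le> l \<and> l \<le> d \<longrightarrow> keyv x (r ! (l - 1)) (r ! l))"
  unfolding has_pattern_def keyv_def by auto

lemma keyv_trans: "keyv x a b \<Longrightarrow> keyv x b c \<Longrightarrow> keyv x a c"
  unfolding keyv_def by auto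

lemma keyv_asym: "keyv x a b \<Longrightarrow> \<not> keyv x b a"
  unfolding keyv_def by auto

lemma perms_length: "r \<in> perms d \<Longrightarrow> length r = Suc d"
  unfolding perms_def using distinct_card by fastforce

lemma chain:
  assumes "has_pattern x d r" "r \<in> perms d" "a < b" "b \<le> d"
  shows "keyv x (r ! a) (r ! b)"
  using assms(3,4)
proof (induction b)
  case 0 then show ?case by simp
next
  case (Suc b)
  have st: "keyv x (r ! b) (r ! Suc b)"
  proof -
    have "\<forall>l. 1 \<le> l \<and> l \<le> d \<longrightarrow> keyv x (r ! (l - 1)) (r ! l)"
      using assms(1) unfolding has_pattern_keyv .
    moreover have "1 \<le> Suc b \<and> Suc b \<le> d" using Suc.prems by simp
    ultimately have "keyv x (r ! (Suc b - 1)) (r ! Suc b)" by blast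
    then show ?thesis by simp
  qed
  show ?case
  proof (cases "a = b")
    case True then show ?thesis using st by simp
  next
    case False
    then have "keyv x (r ! a) (r ! b)" using Suc by auto
    then show ?thesis using st keyv_trans by blast
  qed
qed

lemma same_key:
  assumes r: "r \<in> perms d" and hx: "has_pattern x d r" and hy: "has_pattern y d r"
    and ij: "i \<le> d" "j \<le> d"
  shows "keyv x i j = keyv y i j"
proof -
  have len: "length r = Suc d" using perms_length r .
  have sr: "set r = {0..d}" using r unfolding perms_def by auto
  obtain a where a: "a < Suc d" "r ! a = i" using ij(1) sr len by (metis atLeastAtMost_iff in_set_conv_nth le0)
  obtain b where b: "b < Suc d" "r ! b = j" using ij(2) sr len by (metis atLeastAtMost_iff in_set_conv_nth le0)
  consider "a < b" | "a = b" | "b < a" by linarith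
  then show ?thesis
  proof cases
    case 1 then show ?thesis using chain[OF hx r] chain[OF hy r] a b by auto
  next
    case 2 then show ?thesis using a b unfolding keyv_def by auto
  next
    case 3
    then have "keyv x j i" "keyv y j i" using chain[OF hx r] chain[OF hy r] a b by auto
    then show ?thesis using keyv_asym by blast
  qed
qed


definition KK :: "(nat \<Rightarrow> nat) \<Rightarrow> nat \<Rightarrow> nat \<Rightarrow> bool" where
  "KK u a b \<longleftrightarrow> lex_less ((shift^^b) u) ((shift^^a) u) \<or> ((shift^^a) u = (shift^^b) u \<and> a < b)"

lemma X_lex:
  fixes X :: "(nat \<Rightarrow> nat) \<Rightarrow> real"
  assumes LL: "\<forall>j n. X ((shift ^^ j) s) \<le> X ((shift ^^ n) s) \<longleftrightarrow> lex_le ((shift ^^ j) s) ((shift ^^ n) s)"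
  shows "X ((shift ^^ a) s) < X ((shift ^^ b) s) \<longleftrightarrow> lex_less ((shift ^^ a) s) ((shift ^^ b) s)"
    and "X ((shift ^^ a) s) = X ((shift ^^ b) s) \<longleftrightarrow> (shift ^^ a) s = (shift ^^ b) s"
proof -
  have "X ((shift ^^ a) s) < X ((shift ^^ b) s) \<longleftrightarrow> \<not> lex_le ((shift ^^ b) s) ((shift ^^ a) s)"
  proof -
    have "X ((shift ^^ b) s) \<le> X ((shift ^^ a) s) \<longleftrightarrow> lex_le ((shift ^^ b) s) ((shift ^^ a) s)"
      using LL by blast
    then show ?thesis by (metis not_le)
  qed
  then show "X ((shift ^^ a) s) < X ((shift ^^ b) s) \<longleftrightarrow> lex_less ((shift ^^ a) s) ((shift ^^ b) s)"
    using lex_le_not by blast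
  have "X ((shift ^^ a) s) = X ((shift ^^ b) s) \<longleftrightarrow> lex_le ((shift ^^ a) s) ((shift ^^ b) s) \<and> lex_le ((shift ^^ b) s) ((shift ^^ a) s)"
    using LL by (metis order_antisym order_refl)
  then show "X ((shift ^^ a) s) = X ((shift ^^ b) s) \<longleftrightarrow> (shift ^^ a) s = (shift ^^ b) s"
    unfolding lex_le_def using lex_asym by metis
qed

lemma keyK:
  fixes X :: "(nat \<Rightarrow> nat) \<Rightarrow> real"
  assumes LL: "\<forall>j n. X ((shift ^^ j) s) \<le> X ((shift ^^ n) s) \<longleftrightarrow> lex_le ((shift ^^ j) s) ((shift ^^ n) s)"
    and "i \<le> d" "j \<le> d"
  shows "keyv (\<lambda>i. X ((shift ^^ (d - i)) s)) i j \<longleftrightarrow> KK s (d - i) (d - j)"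
proof -
  have "j < i \<longleftrightarrow> d - i < d - j" using assms(2,3) by linarith
  then show ?thesis unfolding keyv_def KK_def using X_lex[OF LL] by metis
qed

lemma keyK1:
  fixes X :: "(nat \<Rightarrow> nat) \<Rightarrow> real"
  assumes LL: "\<forall>j n. X ((shift ^^ j) s) \<le> X ((shift ^^ n) s) \<longleftrightarrow> lex_le ((shift ^^ j) s) ((shift ^^ n) s)"
    and "i \<le> d" "j \<le> d"
  shows "keyv (\<lambda>i. X ((shift ^^ (d - i)) (shift s))) i j \<longleftrightarrow> KK s (Suc (d - i)) (Suc (d - j))"
proof -
  have e: "\<And>n. (shift ^^ n) (shift s) = (shift ^^ Suc n) s" by (simp only: funpow_Suc_right comp_apply)
  have "j < i \<longleftrightarrow> Suc (d - i) < Suc (d - j)" using assms(2,3) by linarith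
  then show ?thesis unfolding keyv_def KK_def e using X_lex[OF LL] by metis
qed

lemma KK_digit:
  assumes u: "u \<in> seqspace" and nz: "(shift ^^ k) u \<noteq> (\<lambda>_. 0)"
  shows "KK u k (Suc k) \<longleftrightarrow> u k = 1"
proof -
  define v where "v = (\<lambda>j. u (j + k))"
  have v01: "\<forall>i. v i \<in> {0,1}" using u unfolding v_def seqspace_def by auto
  have sk: "(shift ^^ k) u = v" unfolding v_def shift_pow ..
  have sk1: "(shift ^^ Suc k) u = (\<lambda>j. v (Suc j))" unfolding v_def shift_pow by simp
  have "v 0 = u k" unfolding v_def by simp
  show ?thesis
  proof (cases "u k = 1")
    case True
    then have "lex_less (\<lambda>j. v (Suc j)) v \<or> (\<lambda>j. v (Suc j)) = v" using E1[OF v01] \<open>v 0 = u k\<close> by simp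
    then show ?thesis unfolding KK_def sk sk1 using True by auto
  next
    case False
    have "u k \<in> {0,1}" using u unfolding seqspace_def by auto
    then have "v 0 = 0" using False \<open>v 0 = u k\<close> by auto
    then have "lex_less v (\<lambda>j. v (Suc j))" using E0[OF v01] nz sk by simp
    then show ?thesis unfolding KK_def sk sk1 using False lex_asym lex_irrefl by metis
  qed
qed

lemma KK_zero:
  assumes "0 < k"
  shows "KK u 0 k \<longleftrightarrow> u k < u 0 \<or> (u k = u 0 \<and> KK u (Suc 0) (Suc k))"
proof -
  have a: "lex_less (\<lambda>j. u (j + k)) u \<longleftrightarrow> u k < u 0 \<or> (u k = u 0 \<and> lex_less (\<lambda>j. u (Suc (j + k))) (\<lambda>j. u (Suc j)))"
    by (subst lex_cons) simp
  have b: "(u = (\<lambda>j. u (j + k))) \<longleftrightarrow> u 0 = u k \<and> (\<lambda>j. u (Suc j)) = (\<lambda>j. u (Suc (j + k)))"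
    by (subst eq_cons) simp
  show ?thesis unfolding KK_def shift_pow using a b assms by auto
qed

lemma KK_zero_rev:
  assumes "0 < k"
  shows "KK u k 0 \<longleftrightarrow> \<not> KK u 0 k"
  unfolding KK_def using assms lex_total lex_asym lex_irrefl by (metis not_less_zero)

lemma nz_of:
  assumes "u \<in> seqspace" "shift u \<notin> zero_orbit" "1 \<le> k"
  shows "(shift ^^ k) u \<noteq> (\<lambda>_. 0)"
proof
  assume h: "(shift ^^ k) u = (\<lambda>_. 0)"
  have su: "shift u \<in> seqspace" using assms(1) unfolding seqspace_def shift_def by auto
  have "(shift ^^ (k - 1)) (shift u) = (shift ^^ k) u"
  proof -
    obtain k' where k: "k = Suc k'" using assms(3) by (cases k) auto
    show ?thesis unfolding k by (simp only: funpow_Suc_right comp_apply diff_Suc_1)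
  qed
  then have "shift u \<in> zero_orbit" unfolding zero_orbit_def using h su by auto
  then show False using assms(2) by simp
qed

lemma main:
  fixes X :: "(nat \<Rightarrow> nat) \<Rightarrow> real"
  assumes LL: "\<forall>s\<in>seqspace. \<forall>j n. X ((shift ^^ j) s) \<le> X ((shift ^^ n) s) \<longleftrightarrow> lex_le ((shift ^^ j) s) ((shift ^^ n) s)"
    and r': "r' \<in> perms d" and r: "r \<in> perms d"
    and s: "s \<in> seqspace" and t: "t \<in> seqspace" and st0: "s 0 = t 0"
    and ss: "shift s \<in> pattern_set X d r'" and ts: "shift t \<in> pattern_set X d r'"
    and sO: "shift s \<notin> zero_orbit" and tO: "shift t \<notin> zero_orbit"
    and sp: "s \<in> pattern_set X d r"
  shows "t \<in> pattern_set X d r"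
proof -
  have LLs: "\<forall>j n. X ((shift ^^ j) s) \<le> X ((shift ^^ n) s) \<longleftrightarrow> lex_le ((shift ^^ j) s) ((shift ^^ n) s)"
    using LL s by blast
  have LLt: "\<forall>j n. X ((shift ^^ j) t) \<le> X ((shift ^^ n) t) \<longleftrightarrow> lex_le ((shift ^^ j) t) ((shift ^^ n) t)"
    using LL t by blast
  have hs: "has_pattern (\<lambda>i. X ((shift ^^ (d - i)) (shift s))) d r'" using ss unfolding pattern_set_def by auto
  have ht: "has_pattern (\<lambda>i. X ((shift ^^ (d - i)) (shift t))) d r'" using ts unfolding pattern_set_def by auto
  have H1: "KK s (Suc a) (Suc b) = KK t (Suc a) (Suc b)" if "a \<le> d" "b \<le> d" for a b
  proof -
    have "keyv (\<lambda>i. X ((shift ^^ (d - i)) (shift s))) (d - a) (d - b) =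
          keyv (\<lambda>i. X ((shift ^^ (d - i)) (shift t))) (d - a) (d - b)"
      using same_key[OF r' hs ht] by simp
    moreover have "d - (d - a) = a" "d - (d - b) = b" using that by auto
    ultimately show ?thesis using keyK1[OF LLs, of "d - a" d "d - b"] keyK1[OF LLt, of "d - a" d "d - b"]
      by simp
  qed
  have dig: "s k = t k" if "1 \<le> k" "k \<le> d" for k
  proof -
    have "KK s (Suc (k - 1)) (Suc k) = KK t (Suc (k - 1)) (Suc k)" using H1[of "k - 1" k] that by simp
    moreover have "Suc (k - 1) = k" using that by simp
    ultimately have "KK s k (Suc k) = KK t k (Suc k)" by simp
    then have "(s k = 1) = (t k = 1)"
      using KK_digit[OF s nz_of[OF s sO that(1)]] KK_digit[OF t nz_of[OF t tO that(1)]] by simp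
    moreover have "s k \<in> {0,1}" "t k \<in> {0,1}" using s t unfolding seqspace_def by auto
    ultimately show ?thesis by auto
  qed
  have z: "KK s 0 k = KK t 0 k" if "1 \<le> k" "k \<le> d" for k
  proof -
    have "KK s (Suc 0) (Suc k) = KK t (Suc 0) (Suc k)" using H1 that by simp
    then show ?thesis using KK_zero[of k s] KK_zero[of k t] dig[OF that] st0 that by simp
  qed
  have allK: "KK s a b = KK t a b" if "a \<le> d" "b \<le> d" for a b
  proof (cases "a = 0")
    case True
    show ?thesis
    proof (cases "b = 0")
      case True then show ?thesis using \<open>a = 0\<close> unfolding KK_def using lex_irrefl by simp
    next
      case False then show ?thesis using z[of b] that True by simp
    qed
  next
    case False
    show ?thesis
    proof (cases "b = 0")
      case True then show ?thesis using z[of a] that False KK_zero_rev by simp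
    next
      case False2: False
      then show ?thesis using H1[of "a - 1" "b - 1"] that False by simp
    qed
  qed
  have hsp: "has_pattern (\<lambda>i. X ((shift ^^ (d - i)) s)) d r" using sp unfolding pattern_set_def by auto
  have len: "length r = Suc d" using perms_length r .
  have sr: "set r = {0..d}" using r unfolding perms_def by auto
  have rle: "r ! l \<le> d" if "l \<le> d" for l
    using that len sr by (metis atLeastAtMost_iff le_imp_less_Suc nth_mem)
  have "has_pattern (\<lambda>i. X ((shift ^^ (d - i)) t)) d r"
    unfolding has_pattern_keyv
  proof (intro allI impI)
    fix l assume l: "1 \<le> l \<and> l \<le> d"
    have "keyv (\<lambda>i. X ((shift ^^ (d - i)) s)) (r ! (l - 1)) (r ! l)"
      using hsp l unfolding has_pattern_keyv by blast
    moreover have "r ! (l - 1) \<le> d" using rle[of "l - 1"] l by linarith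
    moreover have "r ! l \<le> d" using rle[of l] l by linarith
    ultimately show "keyv (\<lambda>i. X ((shift ^^ (d - i)) t)) (r ! (l - 1)) (r ! l)"
      using keyK[OF LLs] keyK[OF LLt] allK by simp
  qed
  then show ?thesis using t unfolding pattern_set_def by auto
qed


lemma shiftO: "s \<in> seqspace \<Longrightarrow> shift s \<in> zero_orbit \<Longrightarrow> s \<in> zero_orbit"
proof -
  assume a: "s \<in> seqspace" "shift s \<in> zero_orbit"
  then obtain n where "(shift ^^ n) (shift s) = (\<lambda>_. 0)" unfolding zero_orbit_def by auto
  then have "(shift ^^ Suc n) s = (\<lambda>_. 0)" by (simp only: funpow_Suc_right comp_apply)
  then show ?thesis using a(1) unfolding zero_orbit_def by blast
qed

lemma cyl1: "cyl [a] = {s \<in> seqspace. s 0 = a}"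
  unfolding cyl_def by auto

theorem lemma8:
  fixes q :: "nat \<Rightarrow> nat \<Rightarrow> real" and p :: "nat \<Rightarrow> real"
    and M :: "(nat \<Rightarrow> nat) measure" and X :: "(nat \<Rightarrow> nat) \<Rightarrow> real"
    and d a0 :: nat and Pi Pj :: "(nat \<Rightarrow> nat) set"
  assumes "markov_shift q p M"
    and "ergodic_shift M"
    and "X \<in> borel_measurable M"
    and "lexicographic_like M X"
    and "d \<ge> 1"
    and "Pi \<in> mod_partition X d" and "Pj \<in> mod_partition X d"
    and "a0 \<in> {0, 1}" and "Pi \<subseteq> cyl [a0]"
  shows "Pi \<inter> (shift -` Pj \<inter> seqspace) = cyl [a0] \<inter> (shift -` Pj \<inter> seqspace)
         \<or> emeasure M (Pi \<inter> (shift -` Pj \<inter> seqspace)) = 0"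
proof -
  have sp: "space M = seqspace" using assms(1) unfolding markov_shift_def by auto
  have LL: "\<forall>s\<in>seqspace. \<forall>j n. X ((shift ^^ j) s) \<le> X ((shift ^^ n) s) \<longleftrightarrow> lex_le ((shift ^^ j) s) ((shift ^^ n) s)"
    using assms(4) sp unfolding lexicographic_like_def by auto
  have z0: "(\<lambda>_. 0::nat) \<in> zero_orbit" unfolding zero_orbit_def seqspace_def
    by (auto intro!: exI[of _ 0])
  have z1: "(\<lambda>j. if j = 0 then 1 else 0::nat) \<in> zero_orbit" unfolding zero_orbit_def seqspace_def
    by (auto intro!: exI[of _ 1] simp: shift_def)
  have PiO: "Pi \<noteq> zero_orbit"
  proof
    assume "Pi = zero_orbit"
    then have "(\<lambda>_. 0::nat) \<in> cyl [a0]" "(\<lambda>j. if j = 0 then 1 else 0::nat) \<in> cyl [a0]"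
      using z0 z1 assms(9) by auto
    then show False unfolding cyl1 by auto
  qed
  then obtain r where r: "r \<in> perms d" and Pir: "Pi = pattern_set X d r - zero_orbit"
    using assms(6) unfolding mod_partition_def ordinal_partition_def by auto
  show ?thesis
  proof (cases "Pj = zero_orbit")
    case True
    have "Pi \<inter> (shift -` Pj \<inter> seqspace) = {}"
      using True shiftO Pir by auto
    then show ?thesis by simp
  next
    case False
    then obtain r' where r': "r' \<in> perms d" and Pjr: "Pj = pattern_set X d r' - zero_orbit"
      using assms(7) unfolding mod_partition_def ordinal_partition_def by auto
    show ?thesis
    proof (cases "Pi \<inter> (shift -` Pj \<inter> seqspace) = {}")
      case True then show ?thesis by simp
    next
      case False
      then obtain s where s: "s \<in> Pi" "shift s \<in> Pj" "s \<in> seqspace" by auto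
      have s0: "s 0 = a0" using s(1) assms(9) unfolding cyl1 by auto
      have "cyl [a0] \<inter> (shift -` Pj \<inter> seqspace) \<subseteq> Pi"
      proof
        fix t assume t: "t \<in> cyl [a0] \<inter> (shift -` Pj \<inter> seqspace)"
        then have ts: "t \<in> seqspace" "t 0 = a0" "shift t \<in> Pj" unfolding cyl1 by auto
        have "t \<in> pattern_set X d r"
          using main[OF LL r' r s(3) ts(1)] s0 ts s Pjr Pir by auto
        moreover have "t \<notin> zero_orbit"
        proof
          assume "t \<in> zero_orbit"
          then obtain n where n: "(shift ^^ n) t = (\<lambda>_. 0)" unfolding zero_orbit_def by auto
          have st: "shift t \<in> seqspace" using ts(1) unfolding seqspace_def shift_def by auto
          have "(shift ^^ n) (shift t) = (\<lambda>_. 0)"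
          proof (cases n)
            case 0 then show ?thesis using n by (simp add: shift_def)
          next
            case (Suc m)
            then have "(shift ^^ n) (shift t) = shift ((shift ^^ n) t)"
              by (metis comp_apply funpow_Suc_right funpow.simps(2))
            then show ?thesis using n by (simp add: shift_def)
          qed
          then have "shift t \<in> zero_orbit" using st unfolding zero_orbit_def by auto
          then show False using ts(3) Pjr by auto
        qed
        ultimately show "t \<in> Pi" using Pir by auto
      qed
      then have "Pi \<inter> (shift -` Pj \<inter> seqspace) = cyl [a0] \<inter> (shift -` Pj \<inter> seqspace)"
        using assms(9) by auto
      then show ?thesis by simp
    qed
  qed
qed

end
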